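(* Let $1\le r\le N-1$ and let $\mathcal A=\mathbb{C}^{N\times N}((\epsilon))$ denote the ring of matrix asymptotic expansions $M_0+M_1\epsilon+O(\epsilon^2)$, $M_i\in\mathbb{C}^{N\times N}$, $\epsilon\to0$. Write matrices in block form $\begin{pmatrix}A&B\\C&D\end{pmatrix}$ with $A\in\mathbb{C}^{r\times r}$, $B\in\mathbb{C}^{r\times(N-r)}$, $C\in\mathbb{C}^{(N-r)\times r}$, $D\in\mathbb{C}^{(N-r)\times(N-r)}$. Let $\mathfrak K$ be the set of matrices with $A=0,B=0$, and $\mathfrak L$ the set of matrices with $B=0,D=0$; let $\mathcal A_{\mathfrak K}=\{K\in\mathcal A: K|_{\epsilon=0}\in\mathfrak K\}$ and $\mathcal A_{\mathfrak L}=\{L\in\mathcal A: L|_{\epsilon=0}\in\mathfrak L\}$. Then: (1) $\mathcal A_{\mathfrak K}$ and $\mathcal A_{\mathfrak L}$ are subrings (without identity) of $\mathcal A$. (2) If $K\in\mathcal A_{\mathfrak K}$ with $\det K=O(\epsilon^r)$ as $\epsilon\to0$, then $K^{-1}\in\epsilon^{-1}\mathcal A_{\mathfrak L}$; conversely, if $L\in\epsilon^{-1}\mathcal A_{\mathfrak L}$ with $\det L=O(\epsilon^{-r})$, then $L^{-1}\in\mathcal A_{\mathfrak K}$. (3) If $K=\begin{pmatrix}0&0\\C_0&D_0\end{pmatrix}+\begin{pmatrix}A_1&B_1\\C_1&D_1\end{pmatrix}\epsilon+O(\epsilon^2)\in\mathcal A_{\mathfrak K}$, then $\det K=\epsilon^r\det\begin{pmatrix}A_1&B_1\\C_0&D_0\end{pmatrix}+O(\epsilon^{r+1})$.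 (4) If $L=\begin{pmatrix}A_0&0\\C_0&0\end{pmatrix}\epsilon^{-1}+\begin{pmatrix}A_1&B_1\\C_1&D_1\end{pmatrix}+O(\epsilon)\in\epsilon^{-1}\mathcal A_{\mathfrak L}$, then $\det L=\epsilon^{-r}\det\begin{pmatrix}A_0&B_1\\C_0&D_1\end{pmatrix}+O(\epsilon^{-r+1})$. (5) $\mathcal A_{\mathfrak K}\cdot\mathcal A\subset\mathcal A_{\mathfrak K}$ and $\mathcal A\cdot\mathcal A_{\mathfrak L}\subset\mathcal A_{\mathfrak L}$ (right and left ideals, respectively). (6) $\epsilon^{-1}\mathcal A_{\mathfrak L}\cdot\mathcal A_{\mathfrak K}\subset\mathcal A$.
   Context: A condition $\det X=O(\epsilon^{k})$ is understood in the paper's sense of exact order: $\det X=c\,\epsilon^{k}+O(\epsilon^{k+1})$ with $c\neq0$. $\epsilon^{-1}\mathcal A_{\mathfrak L}$ denotes the set of expansions $\epsilon^{-1}L$ with $L\in\mathcal A_{\mathfrak L}$. *)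

theory Defs
  imports "Jordan_Normal_Form.Determinant" "HOL-Computational_Algebra.Formal_Laurent_Series"
begin

text \<open>An element of C^{NxN}((eps)) is modelled as an N x N matrix whose entries are
  formal Laurent series in eps over the complex numbers.\<close>

type_synonym mexp = "complex fls mat"

definition bigO_eps :: "complex fls \<Rightarrow> int \<Rightarrow> bool" where
  "bigO_eps f k \<longleftrightarrow> (\<forall>n<k. fls_nth f n = 0)"

definition exact_order_eps :: "complex fls \<Rightarrow> int \<Rightarrow> bool" where
  "exact_order_eps f k \<longleftrightarrow> (\<exists>c. c \<noteq> 0 \<and> bigO_eps (f - fls_const c * fls_X_intpow k) (k + 1))"

definition coeff_mat :: "mexp \<Rightarrow> int \<Rightarrow> complex mat" where
  "coeff_mat M n = map_mat (\<lambda>f. fls_nth f n) M"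

definition Aring :: "nat \<Rightarrow> mexp set" where
  "Aring N = {M \<in> carrier_mat N N. \<forall>i<N. \<forall>j<N. \<forall>n<0. fls_nth (M $$ (i,j)) n = 0}"

definition Kset :: "nat \<Rightarrow> nat \<Rightarrow> complex mat set" where
  "Kset N r = {M. \<exists>C D. C \<in> carrier_mat (N - r) r \<and> D \<in> carrier_mat (N - r) (N - r) \<and>
      M = four_block_mat (0\<^sub>m r r) (0\<^sub>m r (N - r)) C D}"

definition Lset :: "nat \<Rightarrow> nat \<Rightarrow> complex mat set" where
  "Lset N r = {M. \<exists>A C. A \<in> carrier_mat r r \<and> C \<in> carrier_mat (N - r) r \<and>
      M = four_block_mat A (0\<^sub>m r (N - r)) C (0\<^sub>m (N - r) (N - r))}"

definition AK :: "nat \<Rightarrow> nat \<Rightarrow> mexp set" where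
  "AK N r = {K \<in> Aring N. coeff_mat K 0 \<in> Kset N r}"

definition AL :: "nat \<Rightarrow> nat \<Rightarrow> mexp set" where
  "AL N r = {L \<in> Aring N. coeff_mat L 0 \<in> Lset N r}"

definition epsinv_AL :: "nat \<Rightarrow> nat \<Rightarrow> mexp set" where
  "epsinv_AL N r = {fls_X_intpow (-1) \<cdot>\<^sub>m L | L. L \<in> AL N r}"

definition is_subring_noid :: "nat \<Rightarrow> mexp set \<Rightarrow> bool" where
  "is_subring_noid N S \<longleftrightarrow> S \<subseteq> carrier_mat N N \<and> 0\<^sub>m N N \<in> S \<and>
     (\<forall>X\<in>S. \<forall>Y\<in>S. X + Y \<in> S \<and> X - Y \<in> S \<and> X * Y \<in> S)"

end

theory Submission
  imports Defs
begin


definition P :: "complex fls \<Rightarrow> bool" where "P f \<longleftrightarrow> (\<forall>n<0. fls_nth f n = 0)"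

lemma P_conv: "P f \<Longrightarrow> f = fps_to_fls (fls_regpart f)"
  unfolding P_def by (intro fls_eqI) auto

lemma P_fps[simp]: "P (fps_to_fls g)" unfolding P_def by simp

interpretation F: comm_ring_hom "fps_to_fls :: complex fps \<Rightarrow> complex fls"
  by unfold_locales (auto simp: fls_times_fps_to_fls)

interpretation Z: comm_ring_hom "(\<lambda>f. fps_nth f 0) :: complex fps \<Rightarrow> complex"
  by unfold_locales auto

lemma Xshift: "fls_nth (fls_X_intpow i * (f::complex fls)) n = fls_nth f (n - i)"
  by (simp add: fls_X_intpow_times_conv_shift)

lemma XX: "fls_X_intpow i * fls_X_intpow (-i) = (1::complex fls)"
  using fls_X_intpow_times_fls_X_intpow[of i "-i", where 'a=complex] by simp

lemma Aring_iff: "M \<in> Aring N \<longleftrightarrow> M \<in> carrier_mat N N \<and> (\<forall>i<N. \<forall>j<N. P (M $$ (i,j)))"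
  unfolding Aring_def P_def by auto

lemma Aring_conv: assumes "M \<in> Aring N"
  shows "M = map_mat fps_to_fls (map_mat fls_regpart M)"
  using assms unfolding Aring_iff by (intro eq_matI) (auto intro: P_conv)

lemma coeff_map: "coeff_mat (map_mat fps_to_fls M) 0 = map_mat (\<lambda>f. fps_nth f 0) M"
  unfolding coeff_mat_def by (intro eq_matI) auto

lemma Aring_map[simp]: "M \<in> carrier_mat N N \<Longrightarrow> map_mat fps_to_fls M \<in> Aring N"
  unfolding Aring_iff by auto

lemma det_P: assumes "M \<in> Aring N"
  shows "P (det M) \<and> fls_nth (det M) 0 = det (coeff_mat M 0)"
proof -
  let ?M = "map_mat fls_regpart M"
  have e: "M = map_mat fps_to_fls ?M" by (rule Aring_conv[OF assms])
  have "det M = fps_to_fls (det ?M)" by (subst e, simp)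
  moreover have "coeff_mat M 0 = map_mat (\<lambda>f. fps_nth f 0) ?M" by (subst e, rule coeff_map)
  ultimately show ?thesis by simp
qed

lemma mult_Aring: assumes "A \<in> Aring N" "B \<in> Aring N"
  shows "A * B \<in> Aring N \<and> coeff_mat (A * B) 0 = coeff_mat A 0 * coeff_mat B 0"
proof -
  define A' where "A' = map_mat fls_regpart A"
  define B' where "B' = map_mat fls_regpart B"
  have c: "A' \<in> carrier_mat N N" "B' \<in> carrier_mat N N" using assms by (auto simp: Aring_iff A'_def B'_def)
  have eA: "A = map_mat fps_to_fls A'" using Aring_conv[OF assms(1)] A'_def by simp
  have eB: "B = map_mat fps_to_fls B'" using Aring_conv[OF assms(2)] B'_def by simp
  have e: "A * B = map_mat fps_to_fls (A' * B')"
    unfolding eA eB by (rule F.mat_hom_mult[OF c, symmetric])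
  have "coeff_mat (A*B) 0 = map_mat (\<lambda>f. fps_nth f 0) (A' * B')" unfolding e by (rule coeff_map)
  also have "\<dots> = map_mat (\<lambda>f. fps_nth f 0) A' * map_mat (\<lambda>f. fps_nth f 0) B'" by (rule Z.mat_hom_mult[OF c])
  also have "\<dots> = coeff_mat A 0 * coeff_mat B 0" unfolding eA eB coeff_map ..
  finally show ?thesis using c e by auto
qed

lemma inv_Aring: assumes "M \<in> Aring N" "fls_nth (det M) 0 \<noteq> 0"
  shows "\<exists>T \<in> Aring N. M * T = 1\<^sub>m N \<and> T * M = 1\<^sub>m N"
proof -
  define M' where "M' = map_mat fls_regpart M"
  have c: "M' \<in> carrier_mat N N" using assms by (auto simp: Aring_iff M'_def)
  have e: "M = map_mat fps_to_fls M'" using Aring_conv[OF assms(1)] M'_def by simp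
  have "det M = fps_to_fls (det M')" by (subst e, simp)
  hence d0: "fps_nth (det M') 0 \<noteq> 0" using assms(2) by simp
  define T' where "T' = inverse (det M') \<cdot>\<^sub>m adj_mat M'"
  have Tc: "T' \<in> carrier_mat N N" unfolding T'_def using adj_mat(1)[OF c] by simp
  have "M' * T' = inverse (det M') \<cdot>\<^sub>m (det M' \<cdot>\<^sub>m 1\<^sub>m N)" unfolding T'_def
    using adj_mat[OF c] by (simp add: mult_smult_distrib[OF c])
  also have "\<dots> = 1\<^sub>m N" using d0 by (intro eq_matI) (auto simp: inverse_mult_eq_1)
  finally have 1: "M' * T' = 1\<^sub>m N" .
  have "T' * M' = inverse (det M') \<cdot>\<^sub>m (det M' \<cdot>\<^sub>m 1\<^sub>m N)" unfolding T'_def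
    using adj_mat[OF c] by (simp add: mult_smult_assoc_mat[OF _ c])
  also have "\<dots> = 1\<^sub>m N" using d0 by (intro eq_matI) (auto simp: inverse_mult_eq_1)
  finally have 2: "T' * M' = 1\<^sub>m N" .
  show ?thesis
  proof (intro bexI conjI)
    show "map_mat fps_to_fls T' \<in> Aring N" using Tc by simp
    show "M * map_mat fps_to_fls T' = 1\<^sub>m N" unfolding e
      by (simp add: F.mat_hom_mult[OF c Tc, symmetric] 1 F.mat_hom_one)
    show "map_mat fps_to_fls T' * M = 1\<^sub>m N" unfolding e
      by (simp add: F.mat_hom_mult[OF Tc c, symmetric] 2 F.mat_hom_one)
  qed
qed

lemma Kset_iff: assumes "r \<le> N"
  shows "M \<in> Kset N r \<longleftrightarrow> M \<in> carrier_mat N N \<and> (\<forall>i<r. \<forall>j<N. M $$ (i,j) = 0)"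
proof
  assume "M \<in> Kset N r"
  then obtain C D where "C \<in> carrier_mat (N - r) r" "D \<in> carrier_mat (N - r) (N - r)"
    "M = four_block_mat (0\<^sub>m r r) (0\<^sub>m r (N - r)) C D" unfolding Kset_def by auto
  thus "M \<in> carrier_mat N N \<and> (\<forall>i<r. \<forall>j<N. M $$ (i,j) = 0)" using assms by auto
next
  assume h: "M \<in> carrier_mat N N \<and> (\<forall>i<r. \<forall>j<N. M $$ (i,j) = 0)"
  let ?C = "mat (N - r) r (\<lambda>(i,j). M $$ (i + r, j))"
  let ?D = "mat (N - r) (N - r) (\<lambda>(i,j). M $$ (i + r, j + r))"
  have "M = four_block_mat (0\<^sub>m r r) (0\<^sub>m r (N - r)) ?C ?D"
    using h assms by (intro eq_matI) auto
  moreover have "?C \<in> carrier_mat (N - r) r" "?D \<in> carrier_mat (N - r) (N - r)" by auto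
  ultimately show "M \<in> Kset N r" unfolding Kset_def by blast
qed

lemma Lset_iff: assumes "r \<le> N"
  shows "M \<in> Lset N r \<longleftrightarrow> M \<in> carrier_mat N N \<and> (\<forall>i<N. \<forall>j<N. r \<le> j \<longrightarrow> M $$ (i,j) = 0)"
proof
  assume "M \<in> Lset N r"
  then obtain A C where "A \<in> carrier_mat r r" "C \<in> carrier_mat (N - r) r"
    "M = four_block_mat A (0\<^sub>m r (N - r)) C (0\<^sub>m (N - r) (N - r))" unfolding Lset_def by auto
  thus "M \<in> carrier_mat N N \<and> (\<forall>i<N. \<forall>j<N. r \<le> j \<longrightarrow> M $$ (i,j) = 0)" using assms by auto
next
  assume h: "M \<in> carrier_mat N N \<and> (\<forall>i<N. \<forall>j<N. r \<le> j \<longrightarrow> M $$ (i,j) = 0)"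
  let ?A = "mat r r (\<lambda>(i,j). M $$ (i, j))"
  let ?C = "mat (N - r) r (\<lambda>(i,j). M $$ (i + r, j))"
  have "M = four_block_mat ?A (0\<^sub>m r (N - r)) ?C (0\<^sub>m (N - r) (N - r))"
    using h assms by (intro eq_matI) auto
  moreover have "?A \<in> carrier_mat r r" "?C \<in> carrier_mat (N - r) r" by auto
  ultimately show "M \<in> Lset N r" unfolding Lset_def by blast
qed

definition dg :: "nat \<Rightarrow> nat \<Rightarrow> complex fls \<Rightarrow> complex fls \<Rightarrow> complex fls mat" where
  "dg N r a b = mat N N (\<lambda>(i,j). if i = j then (if i < r then a else b) else 0)"

lemma dg_carrier[simp]: "dg N r a b \<in> carrier_mat N N" unfolding dg_def by simp

lemma dg_left: assumes "M \<in> carrier_mat N n"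
  shows "dg N r a b * M = mat N n (\<lambda>(i,j). (if i < r then a else b) * M $$ (i,j))"
proof (rule eq_matI)
  fix i j assume ij: "i < dim_row (mat N n (\<lambda>(i,j). (if i < r then a else b) * M $$ (i,j)))"
    "j < dim_col (mat N n (\<lambda>(i,j). (if i < r then a else b) * M $$ (i,j)))"
  hence "(dg N r a b * M) $$ (i,j) = (\<Sum>k\<in>{0..<N}. (if i = k then (if i < r then a else b) else 0) * M $$ (k,j))"
    using assms by (auto simp: dg_def scalar_prod_def intro!: sum.cong)
  also have "\<dots> = (if i < r then a else b) * M $$ (i,j)" using ij
    by (simp add: if_distrib[of "\<lambda>x. x * _"] cong: if_cong)
  finally show "(dg N r a b * M) $$ (i,j) = mat N n (\<lambda>(i,j). (if i < r then a else b) * M $$ (i,j)) $$ (i,j)"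
    using ij by simp
qed (use assms in \<open>auto simp: dg_def\<close>)

lemma dg_right: assumes "M \<in> carrier_mat n N"
  shows "M * dg N r a b = mat n N (\<lambda>(i,j). M $$ (i,j) * (if j < r then a else b))"
proof (rule eq_matI)
  fix i j assume ij: "i < dim_row (mat n N (\<lambda>(i,j). M $$ (i,j) * (if j < r then a else b)))"
    "j < dim_col (mat n N (\<lambda>(i,j). M $$ (i,j) * (if j < r then a else b)))"
  hence "(M * dg N r a b) $$ (i,j) = (\<Sum>k\<in>{0..<N}. M $$ (i,k) * (if k = j then (if j < r then a else b) else 0))"
    using assms by (auto simp: dg_def scalar_prod_def intro!: sum.cong)
  also have "\<dots> = M $$ (i,j) * (if j < r then a else b)" using ij
    by (simp add: if_distrib[of "\<lambda>x. _ * x"] cong: if_cong)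
  finally show "(M * dg N r a b) $$ (i,j) = mat n N (\<lambda>(i,j). M $$ (i,j) * (if j < r then a else b)) $$ (i,j)"
    using ij by simp
qed (use assms in \<open>auto simp: dg_def\<close>)

lemma dg_mult: "dg N r a b * dg N r c d = dg N r (a*c) (b*d)"
  by (subst dg_left[OF dg_carrier], intro eq_matI) (auto simp: dg_def)

lemma dg_one: "dg N r 1 1 = 1\<^sub>m N"
  by (intro eq_matI) (auto simp: dg_def)

lemma det_dg: assumes "r \<le> N" shows "det (dg N r a b) = a ^ r * b ^ (N - r)"
proof -
  have "det (dg N r a b) = prod_list (map (\<lambda>i. if i < r then a else b) [0..<N])"
    by (subst det_upper_triangular[of _ N]) (auto simp: dg_def diag_mat_def intro!: upper_triangularI arg_cong[where f=prod_list])
  also have "[0..<N] = [0..<r] @ [r..<N]" using upt_add_eq_append[of 0 r "N-r"] assms by simp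
  also have "map (\<lambda>i. if i < r then a else b) ([0..<r] @ [r..<N]) = replicate r a @ replicate (N - r) b"
  proof -
    have "map (\<lambda>i. if i < r then a else b) [0..<r] = map (\<lambda>i. a) [0..<r]" by simp
    moreover have "map (\<lambda>i. if i < r then a else b) [r..<N] = map (\<lambda>i. b) [r..<N]" by simp
    ultimately show ?thesis by (simp add: map_replicate_const)
  qed
  finally show ?thesis by (simp add: prod_list_replicate)
qed




lemma coeff_carrier[simp]: "coeff_mat M n \<in> carrier_mat a b \<longleftrightarrow> M \<in> carrier_mat a b"
  unfolding coeff_mat_def by simp

lemma coeff_idx[simp]: "i < dim_row M \<Longrightarrow> j < dim_col M \<Longrightarrow> coeff_mat M n $$ (i,j) = fls_nth (M $$ (i,j)) n"
  "dim_row (coeff_mat M n) = dim_row M" "dim_col (coeff_mat M n) = dim_col M"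
  unfolding coeff_mat_def by auto

lemma Aring_add: "A \<in> Aring N \<Longrightarrow> B \<in> Aring N \<Longrightarrow> A + B \<in> Aring N \<and> coeff_mat (A + B) 0 = coeff_mat A 0 + coeff_mat B 0"
  unfolding Aring_iff P_def by (auto intro!: eq_matI)

lemma Aring_minus: "A \<in> Aring N \<Longrightarrow> B \<in> Aring N \<Longrightarrow> A - B \<in> Aring N \<and> coeff_mat (A - B) 0 = coeff_mat A 0 - coeff_mat B 0"
  unfolding Aring_iff P_def by (auto intro!: eq_matI)

lemma Aring_zero: "0\<^sub>m N N \<in> Aring N \<and> coeff_mat (0\<^sub>m N N) 0 = 0\<^sub>m N N"
  unfolding Aring_iff P_def by (auto intro!: eq_matI)

context fixes N r :: nat assumes rN: "r \<le> N"
begin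

lemma rlt[simp]: "i < r \<Longrightarrow> i < N" using rN by linarith

lemma Kset_add: "A \<in> Kset N r \<Longrightarrow> B \<in> Kset N r \<Longrightarrow> A + B \<in> Kset N r \<and> A - B \<in> Kset N r"
  unfolding Kset_iff[OF rN] by auto
lemma Lset_add: "A \<in> Lset N r \<Longrightarrow> B \<in> Lset N r \<Longrightarrow> A + B \<in> Lset N r \<and> A - B \<in> Lset N r"
  unfolding Lset_iff[OF rN] by auto
lemma Kset_zero: "0\<^sub>m N N \<in> Kset N r" unfolding Kset_iff[OF rN] by auto
lemma Lset_zero: "0\<^sub>m N N \<in> Lset N r" unfolding Lset_iff[OF rN] by auto

lemma Kset_mult: assumes "A \<in> Kset N r" "B \<in> carrier_mat N N" shows "A * B \<in> Kset N r"
  using assms unfolding Kset_iff[OF rN] by (auto simp: scalar_prod_def)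

lemma Lset_mult: assumes "A \<in> carrier_mat N N" "B \<in> Lset N r" shows "A * B \<in> Lset N r"
  using assms unfolding Lset_iff[OF rN] by (auto simp: scalar_prod_def)

lemma LK_zero: assumes "A \<in> Lset N r" "B \<in> Kset N r" shows "A * B = 0\<^sub>m N N"
proof -
  have A: "A \<in> carrier_mat N N" "\<And>i j. i<N \<Longrightarrow> j<N \<Longrightarrow> r \<le> j \<Longrightarrow> A $$ (i,j) = 0"
    using assms(1) unfolding Lset_iff[OF rN] by auto
  have B: "B \<in> carrier_mat N N" "\<And>i j. i<r \<Longrightarrow> j<N \<Longrightarrow> B $$ (i,j) = 0"
    using assms(2) unfolding Kset_iff[OF rN] by auto
  show ?thesis
  proof (rule eq_matI)
    fix i j assume ij: "i < dim_row (0\<^sub>m N N :: complex mat)" "j < dim_col (0\<^sub>m N N :: complex mat)"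
    have "(A * B) $$ (i,j) = (\<Sum>k\<in>{0..<N}. A $$ (i,k) * B $$ (k,j))"
      using A(1) B(1) ij by (simp add: scalar_prod_def)
    also have "\<dots> = 0"
    proof (intro sum.neutral ballI)
      fix k assume k: "k \<in> {0..<N}"
      show "A $$ (i,k) * B $$ (k,j) = 0"
      proof (cases "k < r")
        case True thus ?thesis using B(2)[of k j] ij by simp
      next
        case False thus ?thesis using A(2)[of i k] ij k by simp
      qed
    qed
    finally show "(A * B) $$ (i,j) = 0\<^sub>m N N $$ (i,j)" using ij by simp
  qed (use A B in auto)
qed

lemma part5a: "K \<in> AK N r \<Longrightarrow> M \<in> Aring N \<Longrightarrow> K * M \<in> AK N r"
  unfolding AK_def using mult_Aring[of K N M] Kset_mult[of "coeff_mat K 0" "coeff_mat M 0"]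
  by (simp add: Aring_iff)

lemma part5b: "M \<in> Aring N \<Longrightarrow> L \<in> AL N r \<Longrightarrow> M * L \<in> AL N r"
  unfolding AL_def using mult_Aring[of M N L] Lset_mult[of "coeff_mat M 0" "coeff_mat L 0"]
  by (simp add: Aring_iff)

lemma part1K: "is_subring_noid N (AK N r) \<and> AK N r \<subseteq> Aring N"
  unfolding is_subring_noid_def
proof (intro conjI ballI subsetI)
  show "0\<^sub>m N N \<in> AK N r" unfolding AK_def using Aring_zero Kset_zero by simp
  fix X Y assume X: "X \<in> AK N r" and Y: "Y \<in> AK N r"
  hence XA: "X \<in> Aring N" "coeff_mat X 0 \<in> Kset N r" and YA: "Y \<in> Aring N" "coeff_mat Y 0 \<in> Kset N r"
    by (auto simp: AK_def)
  show "X + Y \<in> AK N r" unfolding AK_def using Aring_add[OF XA(1) YA(1)] Kset_add[OF XA(2) YA(2)] by simp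
  show "X - Y \<in> AK N r" unfolding AK_def using Aring_minus[OF XA(1) YA(1)] Kset_add[OF XA(2) YA(2)] by simp
  show "X * Y \<in> AK N r" by (rule part5a[OF X YA(1)])
next
  fix X assume "X \<in> AK N r" thus "X \<in> carrier_mat N N" "X \<in> Aring N" by (auto simp: AK_def Aring_iff)
qed

lemma part1L: "is_subring_noid N (AL N r) \<and> AL N r \<subseteq> Aring N"
  unfolding is_subring_noid_def
proof (intro conjI ballI subsetI)
  show "0\<^sub>m N N \<in> AL N r" unfolding AL_def using Aring_zero Lset_zero by simp
  fix X Y assume X: "X \<in> AL N r" and Y: "Y \<in> AL N r"
  hence XA: "X \<in> Aring N" "coeff_mat X 0 \<in> Lset N r" and YA: "Y \<in> Aring N" "coeff_mat Y 0 \<in> Lset N r"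
    by (auto simp: AL_def)
  show "X + Y \<in> AL N r" unfolding AL_def using Aring_add[OF XA(1) YA(1)] Lset_add[OF XA(2) YA(2)] by simp
  show "X - Y \<in> AL N r" unfolding AL_def using Aring_minus[OF XA(1) YA(1)] Lset_add[OF XA(2) YA(2)] by simp
  show "X * Y \<in> AL N r" by (rule part5b[OF XA(1) Y])
next
  fix X assume "X \<in> AL N r" thus "X \<in> carrier_mat N N" "X \<in> Aring N" by (auto simp: AL_def Aring_iff)
qed

lemma Yshift: assumes "P m" "fls_nth m 0 = 0" shows "P (fls_X_intpow (-1) * m)"
  unfolding P_def Xshift
proof (intro allI impI)
  fix n :: int assume "n < 0"
  hence "n - -1 < 0 \<or> n - -1 = 0" by linarith
  thus "fls_nth m (n - -1) = 0" using assms unfolding P_def by auto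
qed

lemma part6: assumes "L \<in> epsinv_AL N r" "K \<in> AK N r" shows "L * K \<in> Aring N"
proof -
  obtain L' where L: "L = fls_X_intpow (-1) \<cdot>\<^sub>m L'" "L' \<in> AL N r" using assms(1) unfolding epsinv_AL_def by auto
  have LA: "L' \<in> Aring N" "K \<in> Aring N" using L assms by (auto simp: AL_def AK_def)
  hence c: "L' \<in> carrier_mat N N" "K \<in> carrier_mat N N" by (auto simp: Aring_iff)
  have e: "L * K = fls_X_intpow (-1) \<cdot>\<^sub>m (L' * K)" unfolding L by (rule mult_smult_assoc_mat[OF c])
  have M: "L' * K \<in> Aring N" "coeff_mat (L' * K) 0 = 0\<^sub>m N N"
    using mult_Aring[OF LA] LK_zero[of "coeff_mat L' 0" "coeff_mat K 0"] L(2) assms(2) by (auto simp: AL_def AK_def)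
  have MC: "L' * K \<in> carrier_mat N N" using c by simp
  show ?thesis unfolding e Aring_iff
  proof (intro conjI allI impI)
    show "fls_X_intpow (-1) \<cdot>\<^sub>m (L' * K) \<in> carrier_mat N N" using MC by simp
    fix i j assume ij: "i < N" "j < N"
    have "P ((L' * K) $$ (i,j))" using M(1) ij unfolding Aring_iff by blast
    moreover have "fls_nth ((L' * K) $$ (i,j)) 0 = 0"
      using arg_cong[OF M(2), of "\<lambda>A. A $$ (i,j)"] ij c by simp
    ultimately have "P (fls_X_intpow (-1) * (L' * K) $$ (i,j))" by (rule Yshift)
    thus "P ((fls_X_intpow (-1) \<cdot>\<^sub>m (L' * K)) $$ (i,j))" using ij c by simp
  qed
qed

end



abbreviation "XX1 \<equiv> (fls_X_intpow 1 :: complex fls)"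
abbreviation "YY1 \<equiv> (fls_X_intpow (-1) :: complex fls)"

lemma XY[simp]: "fls_shift (-1) 1 * fls_shift 1 1 = (1::complex fls)" using XX[of 1] by simp
lemma YX[simp]: "fls_shift 1 1 * fls_shift (-1) 1 = (1::complex fls)" using XX[of 1] by (simp add: mult.commute)
lemma XYm[simp]: "fls_shift (-1) 1 * (fls_shift 1 1 * m) = (m::complex fls)" by (simp add: mult.assoc[symmetric])
lemma YXm[simp]: "fls_shift 1 1 * (fls_shift (-1) 1 * m) = (m::complex fls)" by (simp add: mult.assoc[symmetric])

lemma Xpow[simp]: "fls_shift (-1) 1 ^ n = (fls_shift (- int n) 1 :: complex fls)" using fls_X_intpow_power[of 1 n, where 'a=complex] by simp
lemma Ypow[simp]: "fls_shift 1 1 ^ n = (fls_shift (int n) 1 :: complex fls)" using fls_X_intpow_power[of "-1" n, where 'a=complex] by simp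

lemma shift_nth[simp]: "fls_nth (fls_shift k 1 * (f::complex fls)) n = fls_nth f (n + k)"
  using Xshift[of "-k" f n] by simp

lemma bigO_fin: assumes "P g" "fls_nth g 0 = d"
  shows "bigO_eps (fls_X_intpow k * g - fls_X_intpow k * fls_const d) (k + 1)"
  unfolding bigO_eps_def
proof (intro allI impI)
  fix n assume n: "n < k + 1"
  have "fls_nth (fls_X_intpow k * g - fls_X_intpow k * fls_const d) n
      = fls_nth g (n - k) - fls_nth (fls_const d) (n - k)"
    by (simp only: fls_minus_nth Xshift)
  also have "\<dots> = 0"
  proof (cases "n - k < 0")
    case True thus ?thesis using assms(1) unfolding P_def by simp
  next
    case False hence "n - k = 0" using n by linarith
    thus ?thesis using assms(2) by simp
  qed
  finally show "fls_nth (fls_X_intpow k * g - fls_X_intpow k * fls_const d) n = 0" .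
qed

lemma exact_nth: assumes "exact_order_eps f k" shows "fls_nth f k \<noteq> 0"
proof -
  obtain c where c: "c \<noteq> 0" "bigO_eps (f - fls_const c * fls_X_intpow k) (k + 1)"
    using assms unfolding exact_order_eps_def by auto
  have "fls_nth (f - fls_const c * fls_X_intpow k) k = 0" using c(2) unfolding bigO_eps_def by simp
  moreover have "fls_nth (fls_const c * fls_X_intpow k) k = c"
    by (simp only: mult.commute[of "fls_const c"] Xshift) simp
  ultimately show ?thesis using c(1) by (simp only: fls_minus_nth) simp
qed

context fixes N r :: nat assumes rN: "r \<le> N"
begin

definition Kt :: "complex fls mat \<Rightarrow> complex fls mat" where
  "Kt M = mat N N (\<lambda>(i,j). if i < r then YY1 * M $$ (i,j) else M $$ (i,j))"

definition Lt :: "complex fls mat \<Rightarrow> complex fls mat" where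
  "Lt M = mat N N (\<lambda>(i,j). if j < r then M $$ (i,j) else YY1 * M $$ (i,j))"

lemma Kt_dims[simp]: "dim_row (Kt M) = N" "dim_col (Kt M) = N" unfolding Kt_def by auto
lemma Lt_dims[simp]: "dim_row (Lt M) = N" "dim_col (Lt M) = N" unfolding Lt_def by auto
lemma Kt_carrier[simp]: "Kt M \<in> carrier_mat N N" unfolding Kt_def by simp
lemma Lt_carrier[simp]: "Lt M \<in> carrier_mat N N" unfolding Lt_def by simp

lemma Kt_eq: assumes "M \<in> carrier_mat N N" shows "M = dg N r XX1 1 * Kt M"
  by (subst dg_left[OF Kt_carrier], rule eq_matI) (use assms in \<open>auto simp: Kt_def\<close>)

lemma Lt_eq: assumes "M \<in> carrier_mat N N" shows "M = Lt M * dg N r 1 XX1"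
  by (subst dg_right[OF Lt_carrier], rule eq_matI) (use assms in \<open>auto simp: Lt_def mult.commute\<close>)

lemma Kt_det: assumes "M \<in> carrier_mat N N" shows "det M = fls_X_intpow (int r) * det (Kt M)"
proof -
  have "det M = det (dg N r XX1 1 * Kt M)" using Kt_eq[OF assms] by simp
  also have "\<dots> = det (dg N r XX1 1) * det (Kt M)" by (rule det_mult[OF dg_carrier Kt_carrier])
  finally show ?thesis by (simp add: det_dg[OF rN])
qed

lemma Lt_det: assumes "M \<in> carrier_mat N N" shows "det (YY1 \<cdot>\<^sub>m M) = fls_X_intpow (- int r) * det (Lt M)"
proof -
  have "det (YY1 \<cdot>\<^sub>m M) = YY1 ^ N * det M" using assms by simp
  also have "det M = det (Lt M * dg N r 1 XX1)" using Lt_eq[OF assms] by simp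
  also have "\<dots> = det (Lt M) * det (dg N r 1 XX1)" by (rule det_mult[OF Lt_carrier dg_carrier])
  also have "det (dg N r 1 XX1) = fls_X_intpow (int (N - r))" by (simp add: det_dg[OF rN])
  finally have "det (YY1 \<cdot>\<^sub>m M) = (fls_X_intpow (- int N) * fls_X_intpow (int (N - r))) * det (Lt M)"
    using assms by (simp add: mult_ac)
  also have "fls_X_intpow (- int N) * fls_X_intpow (int (N - r)) = (fls_X_intpow (- int r) :: complex fls)"
    using fls_X_intpow_times_fls_X_intpow[of "- int N" "int (N - r)", where 'a=complex] rN by simp
  finally show ?thesis .
qed

lemma Kt_idx: "i < N \<Longrightarrow> j < N \<Longrightarrow> Kt M $$ (i,j) = (if i < r then YY1 * M $$ (i,j) else M $$ (i,j))"
  unfolding Kt_def by simp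
lemma Lt_idx: "i < N \<Longrightarrow> j < N \<Longrightarrow> Lt M $$ (i,j) = (if j < r then M $$ (i,j) else YY1 * M $$ (i,j))"
  unfolding Lt_def by simp

lemma Kt_Aring: assumes "M \<in> Aring N" "\<And>i j. i < r \<Longrightarrow> j < N \<Longrightarrow> fls_nth (M $$ (i,j)) 0 = 0"
  shows "Kt M \<in> Aring N"
  unfolding Aring_iff
proof (intro conjI allI impI)
  fix i j assume ij: "i < N" "j < N"
  have "P (M $$ (i,j))" using assms(1) ij unfolding Aring_iff by auto
  thus "P (Kt M $$ (i,j))" using ij assms(2)[of i j] Yshift by (auto simp: Kt_idx)
qed simp

lemma Kt_coeff: "i < N \<Longrightarrow> j < N \<Longrightarrow> coeff_mat (Kt M) 0 $$ (i,j) =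
   (if i < r then fls_nth (M $$ (i,j)) 1 else fls_nth (M $$ (i,j)) 0)"
  by (simp add: Kt_idx Xshift)

lemma Lt_coeff: "i < N \<Longrightarrow> j < N \<Longrightarrow> coeff_mat (Lt M) 0 $$ (i,j) =
   (if j < r then fls_nth (M $$ (i,j)) 0 else fls_nth (M $$ (i,j)) 1)"
  by (simp add: Lt_idx Xshift)

end



context fixes N r :: nat assumes rN: "r \<le> N"
begin

lemma part3:
  assumes K: "K \<in> carrier_mat N N" and neg: "\<forall>i<N. \<forall>j<N. \<forall>n<0. fls_nth (K $$ (i,j)) n = 0"
  and c: "A1 \<in> carrier_mat r r" "B1 \<in> carrier_mat r (N - r)"
       "C1 \<in> carrier_mat (N - r) r" "D1 \<in> carrier_mat (N - r) (N - r)"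
       "C0 \<in> carrier_mat (N - r) r" "D0 \<in> carrier_mat (N - r) (N - r)"
  and h0: "coeff_mat K 0 = four_block_mat (0\<^sub>m r r) (0\<^sub>m r (N - r)) C0 D0"
  and h1: "coeff_mat K 1 = four_block_mat A1 B1 C1 D1"
  shows "bigO_eps (det K - fls_X_intpow (int r) * fls_const (det (four_block_mat A1 B1 C0 D0))) (int r + 1)"
proof -
  have KA: "K \<in> Aring N" using K neg unfolding Aring_iff P_def by auto
  have e0: "fls_nth (K $$ (i,j)) 0 = four_block_mat (0\<^sub>m r r) (0\<^sub>m r (N - r)) C0 D0 $$ (i,j)"
    if "i < N" "j < N" for i j using arg_cong[OF h0, of "\<lambda>A. A $$ (i,j)"] that K by simp
  have e1: "fls_nth (K $$ (i,j)) 1 = four_block_mat A1 B1 C1 D1 $$ (i,j)"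
    if "i < N" "j < N" for i j using arg_cong[OF h1, of "\<lambda>A. A $$ (i,j)"] that K by simp
  have z: "fls_nth (K $$ (i,j)) 0 = 0" if "i < r" "j < N" for i j
    using e0[of i j] that rN c by simp
  have KtA: "Kt N r K \<in> Aring N" by (rule Kt_Aring[OF rN KA z])
  have cf: "coeff_mat (Kt N r K) 0 = four_block_mat A1 B1 C0 D0"
  proof (rule eq_matI)
    fix i j assume ij: "i < dim_row (four_block_mat A1 B1 C0 D0)" "j < dim_col (four_block_mat A1 B1 C0 D0)"
    hence ij': "i < N" "j < N" using c rN by auto
    show "coeff_mat (Kt N r K) 0 $$ (i,j) = four_block_mat A1 B1 C0 D0 $$ (i,j)"
      unfolding Kt_coeff[OF rN ij'] using e0[OF ij'] e1[OF ij'] ij' c rN by auto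
  qed (use c rN in auto)
  define d where "d = det (four_block_mat A1 B1 C0 D0)"
  have dP: "P (det (Kt N r K))" "fls_nth (det (Kt N r K)) 0 = d"
    using det_P[OF KtA] cf d_def by auto
  have "det K = fls_X_intpow (int r) * det (Kt N r K)" by (rule Kt_det[OF rN K])
  thus ?thesis using bigO_fin[OF dP, of "int r"] unfolding d_def by simp
qed

lemma part4:
  assumes L: "L \<in> carrier_mat N N" and neg: "\<forall>i<N. \<forall>j<N. \<forall>n < -1. fls_nth (L $$ (i,j)) n = 0"
  and c: "A0 \<in> carrier_mat r r" "C0 \<in> carrier_mat (N - r) r"
       "A1 \<in> carrier_mat r r" "B1 \<in> carrier_mat r (N - r)"
       "C1 \<in> carrier_mat (N - r) r" "D1 \<in> carrier_mat (N - r) (N - r)"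
  and h0: "coeff_mat L (-1) = four_block_mat A0 (0\<^sub>m r (N - r)) C0 (0\<^sub>m (N - r) (N - r))"
  and h1: "coeff_mat L 0 = four_block_mat A1 B1 C1 D1"
  shows "bigO_eps (det L - fls_X_intpow (- int r) * fls_const (det (four_block_mat A0 B1 C0 D1))) (- int r + 1)"
proof -
  define L' where "L' = XX1 \<cdot>\<^sub>m L"
  have L'c: "L' \<in> carrier_mat N N" using L L'_def by simp
  have LL: "L = YY1 \<cdot>\<^sub>m L'" unfolding L'_def using L by (intro eq_matI) auto
  have L'i: "L' $$ (i,j) = XX1 * L $$ (i,j)" if "i < N" "j < N" for i j
    using that L L'_def by simp
  have e0: "fls_nth (L $$ (i,j)) (-1) = four_block_mat A0 (0\<^sub>m r (N - r)) C0 (0\<^sub>m (N - r) (N - r)) $$ (i,j)"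
    if "i < N" "j < N" for i j using arg_cong[OF h0, of "\<lambda>A. A $$ (i,j)"] that L by simp
  have e1: "fls_nth (L $$ (i,j)) 0 = four_block_mat A1 B1 C1 D1 $$ (i,j)"
    if "i < N" "j < N" for i j using arg_cong[OF h1, of "\<lambda>A. A $$ (i,j)"] that L by simp
  have LtA: "Lt N r L' \<in> Aring N" unfolding Aring_iff
  proof (intro conjI allI impI)
    fix i j assume ij: "i < N" "j < N"
    show "P (Lt N r L' $$ (i,j))" unfolding P_def
    proof (intro allI impI)
      fix n :: int assume n: "n < 0"
      show "fls_nth (Lt N r L' $$ (i,j)) n = 0"
      proof (cases "j < r")
        case True
        thus ?thesis using ij n neg by (simp add: Lt_idx[OF rN ij] L'i)
      next
        case False
        hence "fls_nth (Lt N r L' $$ (i,j)) n = fls_nth (L $$ (i,j)) n" by (simp add: Lt_idx[OF rN ij] L'i ij)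
        also have "\<dots> = 0"
        proof (cases "n = -1")
          case True thus ?thesis using e0[OF ij] False ij c rN by simp
        next
          case False2: False thus ?thesis using n neg ij by auto
        qed
        finally show ?thesis .
      qed
    qed
  qed (rule Lt_carrier[OF rN])
  have cf: "coeff_mat (Lt N r L') 0 = four_block_mat A0 B1 C0 D1"
  proof (rule eq_matI)
    fix i j assume ij: "i < dim_row (four_block_mat A0 B1 C0 D1)" "j < dim_col (four_block_mat A0 B1 C0 D1)"
    hence ij': "i < N" "j < N" using c rN by auto
    show "coeff_mat (Lt N r L') 0 $$ (i,j) = four_block_mat A0 B1 C0 D1 $$ (i,j)"
      unfolding Lt_coeff[OF rN ij'] L'i[OF ij'] using e0[OF ij'] e1[OF ij'] ij' c rN by auto
  qed (use c rN in auto)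
  define d where "d = det (four_block_mat A0 B1 C0 D1)"
  have dP: "P (det (Lt N r L'))" "fls_nth (det (Lt N r L')) 0 = d"
    using det_P[OF LtA] cf d_def by auto
  have "det L = fls_X_intpow (- int r) * det (Lt N r L')" unfolding LL by (rule Lt_det[OF rN L'c])
  thus ?thesis using bigO_fin[OF dP, of "- int r"] unfolding d_def by simp
qed

end



lemma dg_dims[simp]: "dim_row (dg N r a b) = N" "dim_col (dg N r a b) = N" by (simp_all add: dg_def)

context fixes N r :: nat assumes rN: "r \<le> N"
begin

lemma part2a: assumes KK: "K \<in> AK N r" and ex: "exact_order_eps (det K) (int r)"
  shows "\<exists>Ki \<in> carrier_mat N N. K * Ki = 1\<^sub>m N \<and> Ki * K = 1\<^sub>m N \<and> Ki \<in> epsinv_AL N r"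
proof -
  have KA: "K \<in> Aring N" and KS: "coeff_mat K 0 \<in> Kset N r" using KK by (auto simp: AK_def)
  have K: "K \<in> carrier_mat N N" using KA by (simp add: Aring_iff)
  have z: "fls_nth (K $$ (i,j)) 0 = 0" if "i < r" "j < N" for i j
    using KS that K rN unfolding Kset_iff[OF rN] by auto
  have KtA: "Kt N r K \<in> Aring N" by (rule Kt_Aring[OF rN KA z])
  have dK: "det K = fls_X_intpow (int r) * det (Kt N r K)" by (rule Kt_det[OF rN K])
  have "fls_nth (det K) (int r) \<noteq> 0" by (rule exact_nth[OF ex])
  hence "fls_nth (det (Kt N r K)) 0 \<noteq> 0" unfolding dK by simp
  then obtain T where T: "T \<in> Aring N" "Kt N r K * T = 1\<^sub>m N" using inv_Aring[OF KtA] by blast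
  have Tc: "T \<in> carrier_mat N N" using T by (simp add: Aring_iff)
  define Ki where "Ki = T * dg N r YY1 1"
  have Kic: "Ki \<in> carrier_mat N N" unfolding Ki_def by (rule mult_carrier_mat[OF Tc dg_carrier])
  have "K * Ki = (dg N r XX1 1 * Kt N r K) * (T * dg N r YY1 1)" using Kt_eq[OF rN K] Ki_def by simp
  also have "\<dots> = dg N r XX1 1 * (Kt N r K * (T * dg N r YY1 1))"
    using Tc by (intro assoc_mult_mat[of _ N N _ N _ N]) (auto intro: Kt_carrier[OF rN])
  also have "Kt N r K * (T * dg N r YY1 1) = (Kt N r K * T) * dg N r YY1 1"
    using Tc by (intro assoc_mult_mat[of _ N N _ N _ N, symmetric]) (auto intro: Kt_carrier[OF rN])
  also have "(Kt N r K * T) * dg N r YY1 1 = dg N r YY1 1" using T(2) left_mult_one_mat[OF dg_carrier] by simp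
  also have "dg N r XX1 1 * dg N r YY1 1 = dg N r 1 1" by (simp add: dg_mult)
  finally have 1: "K * Ki = 1\<^sub>m N" by (simp add: dg_one)
  have 2: "Ki * K = 1\<^sub>m N" by (rule mat_mult_left_right_inverse[OF K Kic 1])
  define L' where "L' = T * dg N r 1 XX1"
  have L'c: "L' \<in> carrier_mat N N" unfolding L'_def by (rule mult_carrier_mat[OF Tc dg_carrier])
  have "YY1 \<cdot>\<^sub>m L' = T * (YY1 \<cdot>\<^sub>m dg N r 1 XX1)" unfolding L'_def
    by (rule mult_smult_distrib[OF Tc dg_carrier, symmetric])
  also have "YY1 \<cdot>\<^sub>m dg N r 1 XX1 = dg N r YY1 1" by (intro eq_matI) (auto simp: dg_def)
  finally have KiL: "Ki = YY1 \<cdot>\<^sub>m L'" unfolding Ki_def by simp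
  have L'i: "L' $$ (i,j) = (if j < r then 1 else XX1) * T $$ (i,j)" if "i < N" "j < N" for i j
    unfolding L'_def dg_right[OF Tc] using that by (simp add: mult.commute)
  have TP: "P (T $$ (i,j))" if "i < N" "j < N" for i j using T(1) that by (simp add: Aring_iff)
  have L'A: "L' \<in> AL N r" unfolding AL_def
  proof (intro CollectI conjI)
    show "L' \<in> Aring N" unfolding Aring_iff
    proof (intro conjI allI impI)
      fix i j assume ij: "i < N" "j < N"
      show "P (L' $$ (i,j))" using TP[OF ij] unfolding L'i[OF ij] P_def by auto
    qed (rule L'c)
    show "coeff_mat L' 0 \<in> Lset N r" unfolding Lset_iff[OF rN]
    proof (intro conjI allI impI)
      fix i j assume ij: "i < N" "j < N" "r \<le> j"
      show "coeff_mat L' 0 $$ (i,j) = 0" using TP[OF ij(1,2)] ij L'c unfolding P_def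
        by (simp add: L'i)
    qed (use L'c in simp)
  qed
  show ?thesis using Kic 1 2 KiL L'A unfolding epsinv_AL_def by blast
qed

lemma part2b: assumes LL: "L \<in> epsinv_AL N r" and ex: "exact_order_eps (det L) (- int r)"
  shows "\<exists>Li \<in> carrier_mat N N. L * Li = 1\<^sub>m N \<and> Li * L = 1\<^sub>m N \<and> Li \<in> AK N r"
proof -
  obtain L'' where L: "L = YY1 \<cdot>\<^sub>m L''" "L'' \<in> AL N r" using LL unfolding epsinv_AL_def by auto
  have LA: "L'' \<in> Aring N" and LS: "coeff_mat L'' 0 \<in> Lset N r" using L by (auto simp: AL_def)
  have L''c: "L'' \<in> carrier_mat N N" using LA by (simp add: Aring_iff)
  have Lc: "L \<in> carrier_mat N N" using L''c L by simp
  have z: "fls_nth (L'' $$ (i,j)) 0 = 0" if "i < N" "j < N" "r \<le> j" for i j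
    using LS that L''c unfolding Lset_iff[OF rN] by auto
  have LtA: "Lt N r L'' \<in> Aring N" unfolding Aring_iff
  proof (intro conjI allI impI)
    fix i j assume ij: "i < N" "j < N"
    have "P (L'' $$ (i,j))" using LA ij by (simp add: Aring_iff)
    thus "P (Lt N r L'' $$ (i,j))" using z[OF ij] Yshift[OF rN] by (auto simp: Lt_idx[OF rN ij])
  qed (rule Lt_carrier[OF rN])
  have dL: "det L = fls_X_intpow (- int r) * det (Lt N r L'')" unfolding L(1) by (rule Lt_det[OF rN L''c])
  have "fls_nth (det L) (- int r) \<noteq> 0" by (rule exact_nth[OF ex])
  hence "fls_nth (det (Lt N r L'')) 0 \<noteq> 0" unfolding dL by simp
  then obtain T where T: "T \<in> Aring N" "Lt N r L'' * T = 1\<^sub>m N" using inv_Aring[OF LtA] by blast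
  have Tc: "T \<in> carrier_mat N N" using T by (simp add: Aring_iff)
  define Li where "Li = dg N r XX1 1 * T"
  have Lic: "Li \<in> carrier_mat N N" unfolding Li_def by (rule mult_carrier_mat[OF dg_carrier Tc])
  let ?Lt = "Lt N r L''" let ?D1 = "dg N r 1 XX1" let ?D2 = "dg N r XX1 1"
  have Ltc: "?Lt \<in> carrier_mat N N" by (rule Lt_carrier[OF rN])
  have "L * Li = (YY1 \<cdot>\<^sub>m (?Lt * ?D1)) * (?D2 * T)" using Lt_eq[OF rN L''c] L(1) Li_def by simp
  also have "\<dots> = YY1 \<cdot>\<^sub>m ((?Lt * ?D1) * (?D2 * T))"
    by (rule mult_smult_assoc_mat) (use Tc Ltc in auto)
  also have "(?Lt * ?D1) * (?D2 * T) = ?Lt * (?D1 * (?D2 * T))"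
    by (rule assoc_mult_mat[OF Ltc dg_carrier mult_carrier_mat[OF dg_carrier Tc]])
  also have "?D1 * (?D2 * T) = (?D1 * ?D2) * T"
    by (rule assoc_mult_mat[OF dg_carrier dg_carrier Tc, symmetric])
  also have "?D1 * ?D2 = dg N r XX1 XX1" by (simp add: dg_mult)
  also have "dg N r XX1 XX1 * T = XX1 \<cdot>\<^sub>m T"
    by (subst dg_left[OF Tc], intro eq_matI) (use Tc in auto)
  also have "?Lt * (XX1 \<cdot>\<^sub>m T) = XX1 \<cdot>\<^sub>m (?Lt * T)" by (rule mult_smult_distrib[OF Ltc Tc])
  also have "YY1 \<cdot>\<^sub>m (XX1 \<cdot>\<^sub>m (?Lt * T)) = 1\<^sub>m N" unfolding T(2) by (intro eq_matI) auto
  finally have 1: "L * Li = 1\<^sub>m N" .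
  have 2: "Li * L = 1\<^sub>m N" by (rule mat_mult_left_right_inverse[OF Lc Lic 1])
  have Lii: "Li $$ (i,j) = (if i < r then XX1 else 1) * T $$ (i,j)" if "i < N" "j < N" for i j
    unfolding Li_def dg_left[OF Tc] using that by simp
  have TP: "P (T $$ (i,j))" if "i < N" "j < N" for i j using T(1) that by (simp add: Aring_iff)
  have LiA: "Li \<in> AK N r" unfolding AK_def
  proof (intro CollectI conjI)
    show "Li \<in> Aring N" unfolding Aring_iff
    proof (intro conjI allI impI)
      fix i j assume ij: "i < N" "j < N"
      show "P (Li $$ (i,j))" using TP[OF ij] unfolding Lii[OF ij] P_def by auto
    qed (rule Lic)
    show "coeff_mat Li 0 \<in> Kset N r" unfolding Kset_iff[OF rN]
    proof (intro conjI allI impI)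
      fix i j assume ij: "i < r" "j < N"
      have iN: "i < N" using ij rN by simp
      show "coeff_mat Li 0 $$ (i,j) = 0" using TP[OF iN ij(2)] ij iN Lic unfolding P_def
        by (simp add: Lii)
    qed (use Lic in simp)
  qed
  show ?thesis using Lic 1 2 LiA by blast
qed

end


theorem proposition1:
  fixes N r :: nat
  assumes "1 \<le> r" and "r \<le> N - 1"
  shows
   \<comment> \<open>(1)\<close>
   "(is_subring_noid N (AK N r) \<and> AK N r \<subseteq> Aring N \<and>
     is_subring_noid N (AL N r) \<and> AL N r \<subseteq> Aring N)
   \<and> \<comment> \<open>(2)\<close>
    (\<forall>K \<in> AK N r. exact_order_eps (det K) (int r) \<longrightarrow>
       (\<exists>Ki \<in> carrier_mat N N. K * Ki = 1\<^sub>m N \<and> Ki * K = 1\<^sub>m N \<and> Ki \<in> epsinv_AL N r))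
   \<and> (\<forall>L \<in> epsinv_AL N r. exact_order_eps (det L) (- int r) \<longrightarrow>
       (\<exists>Li \<in> carrier_mat N N. L * Li = 1\<^sub>m N \<and> Li * L = 1\<^sub>m N \<and> Li \<in> AK N r))
   \<and> \<comment> \<open>(3)\<close>
    (\<forall>K A1 B1 C1 D1 C0 D0. K \<in> carrier_mat N N \<and> (\<forall>i<N. \<forall>j<N. \<forall>n<0. fls_nth (K $$ (i,j)) n = 0) \<and>
       A1 \<in> carrier_mat r r \<and> B1 \<in> carrier_mat r (N - r) \<and>
       C1 \<in> carrier_mat (N - r) r \<and> D1 \<in> carrier_mat (N - r) (N - r) \<and>
       C0 \<in> carrier_mat (N - r) r \<and> D0 \<in> carrier_mat (N - r) (N - r) \<and>
       coeff_mat K 0 = four_block_mat (0\<^sub>m r r) (0\<^sub>m r (N - r)) C0 D0 \<and>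
       coeff_mat K 1 = four_block_mat A1 B1 C1 D1 \<longrightarrow>
       bigO_eps (det K - fls_X_intpow (int r) * fls_const (det (four_block_mat A1 B1 C0 D0)))
                (int r + 1))
   \<and> \<comment> \<open>(4)\<close>
    (\<forall>L A0 C0 A1 B1 C1 D1. L \<in> carrier_mat N N \<and> (\<forall>i<N. \<forall>j<N. \<forall>n < -1. fls_nth (L $$ (i,j)) n = 0) \<and>
       A0 \<in> carrier_mat r r \<and> C0 \<in> carrier_mat (N - r) r \<and>
       A1 \<in> carrier_mat r r \<and> B1 \<in> carrier_mat r (N - r) \<and>
       C1 \<in> carrier_mat (N - r) r \<and> D1 \<in> carrier_mat (N - r) (N - r) \<and>
       coeff_mat L (-1) = four_block_mat A0 (0\<^sub>m r (N - r)) C0 (0\<^sub>m (N - r) (N - r)) \<and>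
       coeff_mat L 0 = four_block_mat A1 B1 C1 D1 \<longrightarrow>
       bigO_eps (det L - fls_X_intpow (- int r) * fls_const (det (four_block_mat A0 B1 C0 D1)))
                (- int r + 1))
   \<and> \<comment> \<open>(5)\<close>
    (\<forall>K \<in> AK N r. \<forall>M \<in> Aring N. K * M \<in> AK N r)
   \<and> (\<forall>M \<in> Aring N. \<forall>L \<in> AL N r. M * L \<in> AL N r)
   \<and> \<comment> \<open>(6)\<close>
    (\<forall>L \<in> epsinv_AL N r. \<forall>K \<in> AK N r. L * K \<in> Aring N)"
  proof -
  have rN: "r \<le> N" using assms by linarith
  show ?thesis
  proof (intro conjI)
    show "is_subring_noid N (AK N r)" "AK N r \<subseteq> Aring N" using part1K[OF rN] by auto
    show "is_subring_noid N (AL N r)" "AL N r \<subseteq> Aring N" using part1L[OF rN] by auto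
    show "\<forall>K \<in> AK N r. exact_order_eps (det K) (int r) \<longrightarrow>
       (\<exists>Ki \<in> carrier_mat N N. K * Ki = 1\<^sub>m N \<and> Ki * K = 1\<^sub>m N \<and> Ki \<in> epsinv_AL N r)"
      using part2a[OF rN] by blast
    show "\<forall>L \<in> epsinv_AL N r. exact_order_eps (det L) (- int r) \<longrightarrow>
       (\<exists>Li \<in> carrier_mat N N. L * Li = 1\<^sub>m N \<and> Li * L = 1\<^sub>m N \<and> Li \<in> AK N r)"
      using part2b[OF rN] by blast
  next
    show "\<forall>K A1 B1 C1 D1 C0 D0. K \<in> carrier_mat N N \<and> (\<forall>i<N. \<forall>j<N. \<forall>n<0. fls_nth (K $$ (i,j)) n = 0) \<and>
       A1 \<in> carrier_mat r r \<and> B1 \<in> carrier_mat r (N - r) \<and>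
       C1 \<in> carrier_mat (N - r) r \<and> D1 \<in> carrier_mat (N - r) (N - r) \<and>
       C0 \<in> carrier_mat (N - r) r \<and> D0 \<in> carrier_mat (N - r) (N - r) \<and>
       coeff_mat K 0 = four_block_mat (0\<^sub>m r r) (0\<^sub>m r (N - r)) C0 D0 \<and>
       coeff_mat K 1 = four_block_mat A1 B1 C1 D1 \<longrightarrow>
       bigO_eps (det K - fls_X_intpow (int r) * fls_const (det (four_block_mat A1 B1 C0 D0)))
                (int r + 1)"
      by (intro allI impI, elim conjE, rule part3[OF rN], assumption+)
  next
    show "\<forall>L A0 C0 A1 B1 C1 D1. L \<in> carrier_mat N N \<and> (\<forall>i<N. \<forall>j<N. \<forall>n < -1. fls_nth (L $$ (i,j)) n = 0) \<and>
       A0 \<in> carrier_mat r r \<and> C0 \<in> carrier_mat (N - r) r \<and>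
       A1 \<in> carrier_mat r r \<and> B1 \<in> carrier_mat r (N - r) \<and>
       C1 \<in> carrier_mat (N - r) r \<and> D1 \<in> carrier_mat (N - r) (N - r) \<and>
       coeff_mat L (-1) = four_block_mat A0 (0\<^sub>m r (N - r)) C0 (0\<^sub>m (N - r) (N - r)) \<and>
       coeff_mat L 0 = four_block_mat A1 B1 C1 D1 \<longrightarrow>
       bigO_eps (det L - fls_X_intpow (- int r) * fls_const (det (four_block_mat A0 B1 C0 D1)))
                (- int r + 1)"
      by (intro allI impI, elim conjE, rule part4[OF rN], assumption+)
  next
    show "\<forall>K \<in> AK N r. \<forall>M \<in> Aring N. K * M \<in> AK N r" using part5a[OF rN] by blast
    show "\<forall>M \<in> Aring N. \<forall>L \<in> AL N r. M * L \<in> AL N r" using part5b[OF rN] by blast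
    show "\<forall>L \<in> epsinv_AL N r. \<forall>K \<in> AK N r. L * K \<in> Aring N" using part6[OF rN] by blast
  qed
qed

end
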